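(* Let $\mathcal{X}$ be a sample space, $\mathcal{Y}$ a label set, and $y:\mathcal{X}\to\mathcal{Y}$ a deterministic labeling function. Let $p_{\mathrm{sim}}$ be a joint probability distribution on pairs $(x,x^+)\in\mathcal{X}\times\mathcal{X}$, and let $q_{\mathrm{UCL}}$ be a probability distribution on $\mathcal{X}$. Fix $\gamma\in(0,\infty)$, a representation function $f:\mathcal{X}\to S^{d-1}$ (unit sphere in $\mathbb{R}^d$), and set $g(x,x'):=f(x)^\top f(x')/\gamma$. Let $\eta:\mathbb{R}\to\mathbb{R}$ be a hardening function, i.e. nonnegative and nondecreasing on $\mathbb{R}$. For $x\in\mathcal{X}$ define $$\alpha_{\mathrm{H\text{-}UCL}}(x,f):=\mathbb{E}_{x^-\sim q_{\mathrm{UCL}}}[\eta(g(x,x^-))],$$ $$\alpha_{\mathrm{H\text{-}SCL}}(x,f):=\mathbb{E}_{x^-\sim q_{\mathrm{UCL}}}[1(y(x^-)\neq y(x))\,\eta(g(x,x^-))],$$ $$\alpha_{\mathrm{Hcol}}(x,f):=\mathbb{E}_{x^-\sim q_{\mathrm{UCL}}}[1(y(x^-)= y(x))\,\eta(g(x,x^-))],$$ and assume each of these lies in $(0,\infty)$ for all $x\in\mathcal{X}$. Define the conditional distributions $$q_{\mathrm{H\text{-}UCL}}(x^-|x,f)=\frac{\eta(g(x,x^-))\,q_{\mathrm{UCL}}(x^-)}{\alpha_{\mathrm{H\text{-}UCL}}(x,f)},\quad q_{\mathrm{H\text{-}SCL}}(x^-|x,f)=\frac{1(y(x^-)\neq y(x))\,\eta(g(x,x^-))\,q_{\mathrm{UCL}}(x^-)}{\alpha_{\mathrm{H\text{-}SCL}}(x,f)},$$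 $$q_{\mathrm{Hcol}}(x^-|x,f)=\frac{1(y(x^-)= y(x))\,\eta(g(x,x^-))\,q_{\mathrm{UCL}}(x^-)}{\alpha_{\mathrm{Hcol}}(x,f)}.$$ For a conditional negative-sampling distribution $q(\cdot|x)$ define the asymptotic InfoNCE loss $$\mathcal{L}^{(\infty)}_q(f):=\mathbb{E}_{(x,x^+)\sim p_{\mathrm{sim}}}\Big[\log\Big(1+e^{-g(x,x^+)}\,\mathbb{E}_{x^-\sim q(\cdot|x)}\big[e^{g(x,x^-)}\big]\Big)\Big],$$ and write $\mathcal{L}^{(\infty)}_{\mathrm{H\text{-}UCL}}(f)$ and $\mathcal{L}^{(\infty)}_{\mathrm{H\text{-}SCL}}(f)$ for this loss with $q=q_{\mathrm{H\text{-}UCL}}(\cdot|x,f)$ and $q=q_{\mathrm{H\text{-}SCL}}(\cdot|x,f)$ respectively. Suppose that for all $x\in\mathcal{X}$, $$\mathbb{E}_{x^-\sim q_{\mathrm{Hcol}}(\cdot|x,f)}\big[e^{g(x,x^-)}\big]\;\geq\;\mathbb{E}_{x^-\sim q_{\mathrm{H\text{-}SCL}}(\cdot|x,f)}\big[e^{g(x,x^-)}\big].$$ Then $\mathcal{L}^{(\infty)}_{\mathrm{H\text{-}UCL}}(f)\geq \mathcal{L}^{(\infty)}_{\mathrm{H\text{-}SCL}}(f)$.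
   Context: $1(\mathcal{E})$ denotes the indicator of event $\mathcal{E}$. The loss $\mathcal{L}^{(\infty)}_q(f)$ is the limit as $k\to\infty$ of the InfoNCE contrastive loss $\mathbb{E}_{(x,x^+)\sim p_{\mathrm{sim}}}\mathbb{E}_{x^-_{1:k}\text{ iid}\sim q(\cdot|x)}\big[\log\big(1+e^{-g(x,x^+)}\tfrac1k\sum_{j=1}^k e^{g(x,x^-_j)}\big)\big]$ with $k$ negative samples; $x$ is the anchor, $x^+$ the positive sample, $x^-$ negative samples. *)

theory Defs
  imports "HOL-Probability.Probability"
begin

definition sim :: "('a \<Rightarrow> 'v::euclidean_space) \<Rightarrow> real \<Rightarrow> 'a \<Rightarrow> 'a \<Rightarrow> real" where
  "sim f \<gamma> x x' = inner (f x) (f x') / \<gamma>"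

definition hardening :: "(real \<Rightarrow> real) \<Rightarrow> bool" where
  "hardening \<eta> \<longleftrightarrow> (\<forall>t. 0 \<le> \<eta> t) \<and> mono \<eta>"

definition alpha_HUCL :: "'a measure \<Rightarrow> (real \<Rightarrow> real) \<Rightarrow> ('a \<Rightarrow> 'a \<Rightarrow> real) \<Rightarrow> 'a \<Rightarrow> real" where
  "alpha_HUCL q \<eta> g x = (\<integral>x'. \<eta> (g x x') \<partial>q)"

definition alpha_HSCL :: "'a measure \<Rightarrow> ('a \<Rightarrow> 'b) \<Rightarrow> (real \<Rightarrow> real) \<Rightarrow> ('a \<Rightarrow> 'a \<Rightarrow> real) \<Rightarrow> 'a \<Rightarrow> real" where
  "alpha_HSCL q y \<eta> g x = (\<integral>x'. of_bool (y x' \<noteq> y x) * \<eta> (g x x') \<partial>q)"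

definition alpha_Hcol :: "'a measure \<Rightarrow> ('a \<Rightarrow> 'b) \<Rightarrow> (real \<Rightarrow> real) \<Rightarrow> ('a \<Rightarrow> 'a \<Rightarrow> real) \<Rightarrow> 'a \<Rightarrow> real" where
  "alpha_Hcol q y \<eta> g x = (\<integral>x'. of_bool (y x' = y x) * \<eta> (g x x') \<partial>q)"

definition q_HUCL :: "'a measure \<Rightarrow> (real \<Rightarrow> real) \<Rightarrow> ('a \<Rightarrow> 'a \<Rightarrow> real) \<Rightarrow> 'a \<Rightarrow> 'a measure" where
  "q_HUCL q \<eta> g x = density q (\<lambda>x'. ennreal (\<eta> (g x x') / alpha_HUCL q \<eta> g x))"

definition q_HSCL :: "'a measure \<Rightarrow> ('a \<Rightarrow> 'b) \<Rightarrow> (real \<Rightarrow> real) \<Rightarrow> ('a \<Rightarrow> 'a \<Rightarrow> real) \<Rightarrow> 'a \<Rightarrow> 'a measure" where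
  "q_HSCL q y \<eta> g x = density q (\<lambda>x'. ennreal (of_bool (y x' \<noteq> y x) * \<eta> (g x x') / alpha_HSCL q y \<eta> g x))"

definition q_Hcol :: "'a measure \<Rightarrow> ('a \<Rightarrow> 'b) \<Rightarrow> (real \<Rightarrow> real) \<Rightarrow> ('a \<Rightarrow> 'a \<Rightarrow> real) \<Rightarrow> 'a \<Rightarrow> 'a measure" where
  "q_Hcol q y \<eta> g x = density q (\<lambda>x'. ennreal (of_bool (y x' = y x) * \<eta> (g x x') / alpha_Hcol q y \<eta> g x))"

definition InfoNCE_inf :: "('a \<times> 'a) measure \<Rightarrow> ('a \<Rightarrow> 'a \<Rightarrow> real) \<Rightarrow> ('a \<Rightarrow> 'a measure) \<Rightarrow> real" where
  "InfoNCE_inf p g Q = (\<integral>z. ln (1 + exp (- g (fst z) (snd z)) * (\<integral>x'. exp (g (fst z) x') \<partial>(Q (fst z)))) \<partial>p)"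

end

theory Submission imports Defs begin

lemma key:
  fixes Q :: "'a measure" and h e :: "'a \<Rightarrow> real" and P :: "'a \<Rightarrow> bool"
  assumes Q: "prob_space Q" and hm: "h \<in> borel_measurable Q" and em: "e \<in> borel_measurable Q"
    and Pm: "{x\<in>space Q. P x} \<in> sets Q"
    and h0: "\<forall>x\<in>space Q. 0 \<le> h x" and eB: "\<forall>x\<in>space Q. 0 \<le> e x \<and> e x \<le> B"
    and aU: "0 < (\<integral>x. h x \<partial>Q)" and aS: "0 < (\<integral>x. of_bool (\<not> P x) * h x \<partial>Q)"
    and aC: "0 < (\<integral>x. of_bool (P x) * h x \<partial>Q)"
    and hyp: "(\<integral>x. e x \<partial>density Q (\<lambda>x. ennreal (of_bool (P x) * h x / (\<integral>x. of_bool (P x) * h x \<partial>Q))))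
       \<ge> (\<integral>x. e x \<partial>density Q (\<lambda>x. ennreal (of_bool (\<not> P x) * h x / (\<integral>x. of_bool (\<not> P x) * h x \<partial>Q))))"
  shows "(\<integral>x. e x \<partial>density Q (\<lambda>x. ennreal (h x / (\<integral>x. h x \<partial>Q))))
       \<ge> (\<integral>x. e x \<partial>density Q (\<lambda>x. ennreal (of_bool (\<not> P x) * h x / (\<integral>x. of_bool (\<not> P x) * h x \<partial>Q))))"
proof -
  interpret prob_space Q by fact
  define U where "U = (\<integral>x. h x \<partial>Q)"
  define S where "S = (\<integral>x. of_bool (\<not> P x) * h x \<partial>Q)"
  define C where "C = (\<integral>x. of_bool (P x) * h x \<partial>Q)"
  have cm: "(\<lambda>x. of_bool (P x) :: real) \<in> borel_measurable Q"
    by (rule measurable_cong[THEN iffD1, OF _ borel_measurable_indicator[OF Pm]])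
       (auto simp: indicator_def)
  have ncm: "(\<lambda>x. of_bool (\<not> P x) :: real) \<in> borel_measurable Q"
  proof -
    have "(\<lambda>x. 1 - of_bool (P x) :: real) \<in> borel_measurable Q" using cm by measurable
    moreover have "(\<lambda>x. 1 - of_bool (P x) :: real) = (\<lambda>x. of_bool (\<not> P x))" by auto
    ultimately show ?thesis by simp
  qed
  have hi: "integrable Q h" using aU not_integrable_integral_eq by fastforce
  have i1: "integrable Q (\<lambda>x. of_bool (P x) * h x)"
    by (rule Bochner_Integration.integrable_bound[OF hi]) (use cm hm h0 in auto)
  have i2: "integrable Q (\<lambda>x. of_bool (\<not> P x) * h x)"
    by (rule Bochner_Integration.integrable_bound[OF hi]) (use ncm hm h0 in auto)
  have hBi: "integrable Q (\<lambda>x. B * h x)" using hi by simp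
  have he: "\<forall>x\<in>space Q. 0 \<le> h x * e x \<and> h x * e x \<le> B * h x"
    using h0 eB by (auto simp: mult.commute[of B] intro!: mult_left_mono)
  have i3: "integrable Q (\<lambda>x. of_bool (P x) * h x * e x)"
    by (rule Bochner_Integration.integrable_bound[OF hBi]) (use cm hm em he in \<open>auto intro!: AE_I2\<close>)
  have i4: "integrable Q (\<lambda>x. of_bool (\<not> P x) * h x * e x)"
    by (rule Bochner_Integration.integrable_bound[OF hBi]) (use ncm hm em he in \<open>auto intro!: AE_I2\<close>)
  have i5: "integrable Q (\<lambda>x. h x * e x)"
    by (rule Bochner_Integration.integrable_bound[OF hBi]) (use hm em he in \<open>auto intro!: AE_I2\<close>)
  have dens: "(\<integral>x. e x \<partial>density Q (\<lambda>x. ennreal (k x / K))) = (\<integral>x. k x * e x \<partial>Q) / K"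
    if "k \<in> borel_measurable Q" "\<forall>x\<in>space Q. 0 \<le> k x" "0 < K" for k K
  proof -
    have "(\<integral>x. e x \<partial>density Q (\<lambda>x. ennreal (k x / K))) = (\<integral>x. (k x / K) *\<^sub>R e x \<partial>Q)"
      by (rule integral_density) (use that em in \<open>auto intro!: AE_I2\<close>)
    also have "\<dots> = (\<integral>x. k x * e x / K \<partial>Q)" by simp
    also have "\<dots> = (\<integral>x. k x * e x \<partial>Q) / K" by (rule integral_divide_zero)
    finally show ?thesis .
  qed
  have dU: "(\<integral>x. e x \<partial>density Q (\<lambda>x. ennreal (h x / U))) = (\<integral>x. h x * e x \<partial>Q) / U"
    by (rule dens) (use hm h0 aU U_def in auto)
  have dS: "(\<integral>x. e x \<partial>density Q (\<lambda>x. ennreal (of_bool (\<not> P x) * h x / S))) = (\<integral>x. of_bool (\<not> P x) * h x * e x \<partial>Q) / S"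
    by (rule dens) (use hm h0 aS S_def ncm in auto)
  have dC: "(\<integral>x. e x \<partial>density Q (\<lambda>x. ennreal (of_bool (P x) * h x / C))) = (\<integral>x. of_bool (P x) * h x * e x \<partial>Q) / C"
    by (rule dens) (use hm h0 aC C_def cm in auto)
  have sU: "U = S + C"
  proof -
    have "U = (\<integral>x. of_bool (\<not> P x) * h x + of_bool (P x) * h x \<partial>Q)"
      unfolding U_def by (rule Bochner_Integration.integral_cong) auto
    also have "\<dots> = S + C" unfolding S_def C_def by (rule Bochner_Integration.integral_add[OF i2 i1])
    finally show ?thesis .
  qed
  have sE: "(\<integral>x. h x * e x \<partial>Q) = (\<integral>x. of_bool (\<not> P x) * h x * e x \<partial>Q) + (\<integral>x. of_bool (P x) * h x * e x \<partial>Q)"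
  proof -
    have "(\<integral>x. h x * e x \<partial>Q) = (\<integral>x. of_bool (\<not> P x) * h x * e x + of_bool (P x) * h x * e x \<partial>Q)"
      by (rule Bochner_Integration.integral_cong) auto
    also have "\<dots> = (\<integral>x. of_bool (\<not> P x) * h x * e x \<partial>Q) + (\<integral>x. of_bool (P x) * h x * e x \<partial>Q)" by (rule Bochner_Integration.integral_add[OF i4 i3])
    finally show ?thesis .
  qed
  have hyp': "(\<integral>x. of_bool (P x) * h x * e x \<partial>Q) / C \<ge> (\<integral>x. of_bool (\<not> P x) * h x * e x \<partial>Q) / S"
    using hyp unfolding S_def[symmetric] C_def[symmetric] dS dC .
  have pos: "0 < S" "0 < C" using aS aC S_def C_def by auto
  define a where "a = (\<integral>x. of_bool (\<not> P x) * h x * e x \<partial>Q)"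
  define b where "b = (\<integral>x. of_bool (P x) * h x * e x \<partial>Q)"
  have "b \<ge> C * (a / S)" using hyp' pos unfolding a_def[symmetric] b_def[symmetric]
    by (simp add: field_simps)
  moreover have "a = S * (a / S)" using pos by simp
  ultimately have "a + b \<ge> (S + C) * (a / S)" by (metis add_left_mono distrib_right)
  hence "(a + b) / (S + C) \<ge> a / S" using pos by (simp add: field_simps)
  moreover have "(\<integral>x. e x \<partial>density Q (\<lambda>x. ennreal (h x / (\<integral>x. h x \<partial>Q)))) = (a + b) / (S + C)"
    using dU sE sU unfolding U_def a_def b_def by simp
  ultimately show ?thesis using dS unfolding S_def a_def by simp
qed

lemma dens_formula:
  fixes Q :: "'a measure" and k e :: "'a \<Rightarrow> real"
  assumes "k \<in> borel_measurable Q" "\<forall>x\<in>space Q. 0 \<le> k x" "e \<in> borel_measurable Q" "0 \<le> K"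
  shows "(\<integral>x. e x \<partial>density Q (\<lambda>x. ennreal (k x / K))) = (\<integral>x. k x * e x \<partial>Q) / K"
proof -
    have "(\<integral>x. e x \<partial>density Q (\<lambda>x. ennreal (k x / K))) = (\<integral>x. (k x / K) *\<^sub>R e x \<partial>Q)"
      by (rule integral_density) (use assms in \<open>auto intro!: AE_I2\<close>)
    also have "\<dots> = (\<integral>x. k x * e x / K \<partial>Q)" by simp
    also have "\<dots> = (\<integral>x. k x * e x \<partial>Q) / K" by (rule integral_divide_zero)
    finally show ?thesis .
qed

lemma bnd:
  fixes Q :: "'a measure" and h e :: "'a \<Rightarrow> real"
  assumes Q: "prob_space Q" and hm: "h \<in> borel_measurable Q" and em: "e \<in> borel_measurable Q"
    and h0: "\<forall>x\<in>space Q. 0 \<le> h x" and eB: "\<forall>x\<in>space Q. 0 \<le> e x \<and> e x \<le> B"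
    and aU: "0 < (\<integral>x. h x \<partial>Q)"
  shows "(\<integral>x. h x * e x \<partial>Q) / (\<integral>x. h x \<partial>Q) \<le> B"
proof -
  interpret prob_space Q by fact
  have hi: "integrable Q h" using aU not_integrable_integral_eq by fastforce
  have hBi: "integrable Q (\<lambda>x. B * h x)" using hi by simp
  have he: "\<forall>x\<in>space Q. 0 \<le> h x * e x \<and> h x * e x \<le> B * h x"
    using h0 eB by (auto simp: mult.commute[of B] intro!: mult_left_mono)
  have i5: "integrable Q (\<lambda>x. h x * e x)"
    by (rule Bochner_Integration.integrable_bound[OF hBi]) (use hm em he in \<open>auto intro!: AE_I2\<close>)
  have "(\<integral>x. h x * e x \<partial>Q) \<le> (\<integral>x. B * h x \<partial>Q)"
    by (rule integral_mono[OF i5 hBi]) (use he in auto)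
  also have "\<dots> = B * (\<integral>x. h x \<partial>Q)" by simp
  finally show ?thesis using aU by (simp add: divide_le_eq)
qed

theorem lemma1:
  fixes M :: "'a measure" and p_sim :: "('a \<times> 'a) measure" and q_UCL :: "'a measure"
    and y :: "'a \<Rightarrow> 'b" and f :: "'a \<Rightarrow> 'v::euclidean_space"
    and \<gamma> :: real and \<eta> :: "real \<Rightarrow> real"
  assumes "prob_space p_sim" and "sets p_sim = sets (M \<Otimes>\<^sub>M M)"
    and "prob_space q_UCL" and "sets q_UCL = sets M"
    and "f \<in> borel_measurable M"
    and "{z \<in> space (M \<Otimes>\<^sub>M M). y (fst z) = y (snd z)} \<in> sets (M \<Otimes>\<^sub>M M)"
    and "\<forall>x \<in> space M. norm (f x) = 1"
    and "0 < \<gamma>"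
    and "hardening \<eta>"
    and "\<forall>x \<in> space M. 0 < alpha_HUCL q_UCL \<eta> (sim f \<gamma>) x"
    and "\<forall>x \<in> space M. 0 < alpha_HSCL q_UCL y \<eta> (sim f \<gamma>) x"
    and "\<forall>x \<in> space M. 0 < alpha_Hcol q_UCL y \<eta> (sim f \<gamma>) x"
    and "\<forall>x \<in> space M.
           (\<integral>x'. exp (sim f \<gamma> x x') \<partial>(q_Hcol q_UCL y \<eta> (sim f \<gamma>) x))
         \<ge> (\<integral>x'. exp (sim f \<gamma> x x') \<partial>(q_HSCL q_UCL y \<eta> (sim f \<gamma>) x))"
  shows "InfoNCE_inf p_sim (sim f \<gamma>) (q_HUCL q_UCL \<eta> (sim f \<gamma>))
         \<ge> InfoNCE_inf p_sim (sim f \<gamma>) (q_HSCL q_UCL y \<eta> (sim f \<gamma>))"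
proof -
  note A = assms
  have sq: "space q_UCL = space M" using A(4) by (rule sets_eq_imp_space_eq)
  have sp: "space p_sim = space (M \<Otimes>\<^sub>M M)" using A(2) by (rule sets_eq_imp_space_eq)
  note fm[measurable] = A(5)
  have etam[measurable]: "\<eta> \<in> borel_measurable borel"
    using A(9) by (auto simp: hardening_def intro: borel_measurable_mono)
  have eta0: "\<And>t. 0 \<le> \<eta> t" using A(9) by (auto simp: hardening_def)
  have Gb: "\<bar>sim f \<gamma> x x'\<bar> \<le> 1 / \<gamma>" if "x \<in> space M" "x' \<in> space M" for x x'
  proof -
    have "\<bar>inner (f x) (f x')\<bar> \<le> norm (f x) * norm (f x')" by (rule Cauchy_Schwarz_ineq2)
    hence "\<bar>inner (f x) (f x')\<bar> \<le> 1" using A(7) that by simp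
    thus ?thesis using A(8) by (simp add: sim_def abs_div divide_right_mono)
  qed
  have Gm2: "(\<lambda>z. sim f \<gamma> (fst z) (snd z)) \<in> borel_measurable (M \<Otimes>\<^sub>M M)"
    unfolding sim_def by measurable
  have Gm1: "(\<lambda>x'. sim f \<gamma> x x') \<in> borel_measurable M" for x
    unfolding sim_def by measurable
  have Gm1q: "(\<lambda>x'. sim f \<gamma> x x') \<in> borel_measurable q_UCL" for x
    using Gm1 measurable_cong_sets[OF A(4) refl] by blast
  define JU where "JU x = (\<integral>x'. exp (sim f \<gamma> x x') \<partial>(q_HUCL q_UCL \<eta> (sim f \<gamma>) x))" for x
  define JS where "JS x = (\<integral>x'. exp (sim f \<gamma> x x') \<partial>(q_HSCL q_UCL y \<eta> (sim f \<gamma>) x))" for x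
  have JUf: "JU x = (\<integral>x'. \<eta> (sim f \<gamma> x x') * exp (sim f \<gamma> x x') \<partial>q_UCL) / alpha_HUCL q_UCL \<eta> (sim f \<gamma>) x"
    if "x \<in> space M" for x
    unfolding JU_def q_HUCL_def
    by (rule dens_formula) (use that A(10) eta0 Gm1q in auto)
  have eb: "\<forall>x'\<in>space q_UCL. 0 \<le> exp (sim f \<gamma> x x') \<and> exp (sim f \<gamma> x x') \<le> exp (1 / \<gamma>)"
    if "x \<in> space M" for x
    using Gb[OF that] sq by (auto simp: abs_le_iff)
  have JUb: "0 \<le> JU x \<and> JU x \<le> exp (1 / \<gamma>)" if "x \<in> space M" for x
  proof
    show "0 \<le> JU x" unfolding JU_def by (rule integral_nonneg_AE) auto
    show "JU x \<le> exp (1 / \<gamma>)" unfolding JUf[OF that] alpha_HUCL_def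
      by (rule bnd[OF A(3)]) (use that A(10) eta0 Gm1q eb[OF that] in \<open>auto simp: alpha_HUCL_def\<close>)
  qed
  have JSb: "0 \<le> JS x" for x
    unfolding JS_def by (rule integral_nonneg_AE) auto
  have JUS: "JS x \<le> JU x" if x: "x \<in> space M" for x
  proof -
    have "Pair x -` {z \<in> space (M \<Otimes>\<^sub>M M). y (fst z) = y (snd z)} \<in> sets M"
      by (rule sets_Pair1[OF A(6)])
    moreover have "Pair x -` {z \<in> space (M \<Otimes>\<^sub>M M). y (fst z) = y (snd z)} = {x'\<in>space q_UCL. y x' = y x}"
      using x sq by (auto simp: space_pair_measure)
    ultimately have Pm: "{x'\<in>space q_UCL. y x' = y x} \<in> sets q_UCL" using A(4) by simp
    show ?thesis unfolding JU_def JS_def q_HUCL_def q_HSCL_def alpha_HUCL_def alpha_HSCL_def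
      by (rule key[OF A(3) _ _ Pm, where B="exp (1 / \<gamma>)"])
        (use x A(10-13) eta0 Gm1q eb[OF x] in \<open>auto simp: alpha_HUCL_def alpha_HSCL_def alpha_Hcol_def q_HSCL_def q_Hcol_def\<close>)
  qed
  interpret qs: sigma_finite_measure q_UCL using A(3) by (rule prob_space_imp_sigma_finite)
  interpret ps: prob_space p_sim by (rule A(1))
  have sMq: "sets (M \<Otimes>\<^sub>M q_UCL) = sets (M \<Otimes>\<^sub>M M)" using sets_pair_measure_cong[OF refl A(4)] .
  have Phim[measurable]: "(\<lambda>x. \<integral>x'. \<eta> (inner (f x) (f x') / \<gamma>) * exp (inner (f x) (f x') / \<gamma>) \<partial>q_UCL) \<in> borel_measurable M"
  proof (rule qs.borel_measurable_lebesgue_integral)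
    have "(\<lambda>(x, x'). \<eta> (inner (f x) (f x') / \<gamma>) * exp (inner (f x) (f x') / \<gamma>)) \<in> borel_measurable (M \<Otimes>\<^sub>M M)"
      by measurable
    thus "(\<lambda>(x, x'). \<eta> (inner (f x) (f x') / \<gamma>) * exp (inner (f x) (f x') / \<gamma>)) \<in> borel_measurable (M \<Otimes>\<^sub>M q_UCL)"
      using measurable_cong_sets[OF sMq refl] by blast
  qed
  have alm[measurable]: "(\<lambda>x. \<integral>x'. \<eta> (inner (f x) (f x') / \<gamma>) \<partial>q_UCL) \<in> borel_measurable M"
  proof (rule qs.borel_measurable_lebesgue_integral)
    have "(\<lambda>(x, x'). \<eta> (inner (f x) (f x') / \<gamma>)) \<in> borel_measurable (M \<Otimes>\<^sub>M M)"
      by measurable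
    thus "(\<lambda>(x, x'). \<eta> (inner (f x) (f x') / \<gamma>)) \<in> borel_measurable (M \<Otimes>\<^sub>M q_UCL)"
      using measurable_cong_sets[OF sMq refl] by blast
  qed
  define FU where "FU z = ln (1 + exp (- sim f \<gamma> (fst z) (snd z)) * JU (fst z))" for z
  define FS where "FS z = ln (1 + exp (- sim f \<gamma> (fst z) (snd z)) * JS (fst z))" for z
  have eqU: "InfoNCE_inf p_sim (sim f \<gamma>) (q_HUCL q_UCL \<eta> (sim f \<gamma>)) = (\<integral>z. FU z \<partial>p_sim)"
    unfolding InfoNCE_inf_def FU_def JU_def by simp
  have eqS: "InfoNCE_inf p_sim (sim f \<gamma>) (q_HSCL q_UCL y \<eta> (sim f \<gamma>)) = (\<integral>z. FS z \<partial>p_sim)"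
    unfolding InfoNCE_inf_def FS_def JS_def by simp
  have FUm0: "(\<lambda>z. ln (1 + exp (- (inner (f (fst z)) (f (snd z)) / \<gamma>)) *
       ((\<integral>x'. \<eta> (inner (f (fst z)) (f x') / \<gamma>) * exp (inner (f (fst z)) (f x') / \<gamma>) \<partial>q_UCL) /
        (\<integral>x'. \<eta> (inner (f (fst z)) (f x') / \<gamma>) \<partial>q_UCL)))) \<in> borel_measurable (M \<Otimes>\<^sub>M M)"
    by measurable
  have FUm1: "FU \<in> borel_measurable (M \<Otimes>\<^sub>M M)"
    by (rule measurable_cong[THEN iffD1, OF _ FUm0])
       (auto simp: FU_def JUf space_pair_measure alpha_HUCL_def sim_def)
  have FUm: "FU \<in> borel_measurable p_sim"
    using FUm1 measurable_cong_sets[OF A(2) refl] by blast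
  have ptw: "0 \<le> FS z \<and> FS z \<le> FU z \<and> FU z \<le> exp (1 / \<gamma>) * exp (1 / \<gamma>)" if z: "z \<in> space p_sim" for z
  proof -
    have x: "fst z \<in> space M" "snd z \<in> space M" using z unfolding sp space_pair_measure mem_Times_iff by blast+
    have g1: "- sim f \<gamma> (fst z) (snd z) \<le> 1 / \<gamma>" using Gb[OF x] by (rule abs_le_D2)
    have ge: "exp (- sim f \<gamma> (fst z) (snd z)) \<le> exp (1 / \<gamma>)" using g1 by (simp only: exp_le_cancel_iff)
    have e0: "0 \<le> exp (- sim f \<gamma> (fst z) (snd z))" by (rule exp_ge_zero)
    note u = JUb[OF x(1)] and s = JSb[of "fst z"] and us = JUS[OF x(1)]
    have p0: "0 \<le> exp (- sim f \<gamma> (fst z) (snd z)) * JS (fst z)" by (rule mult_nonneg_nonneg[OF e0 s])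
    have p1: "exp (- sim f \<gamma> (fst z) (snd z)) * JS (fst z) \<le> exp (- sim f \<gamma> (fst z) (snd z)) * JU (fst z)"
      by (rule mult_left_mono[OF us e0])
    have p2: "exp (- sim f \<gamma> (fst z) (snd z)) * JU (fst z) \<le> exp (1 / \<gamma>) * exp (1 / \<gamma>)"
      by (rule mult_mono[OF ge conjunct2[OF u] exp_ge_zero conjunct1[OF u]])
    have "0 \<le> FS z" unfolding FS_def by (rule ln_ge_zero) (use p0 in linarith)
    moreover have "FS z \<le> FU z" unfolding FS_def FU_def
      by (subst ln_le_cancel_iff) (use p0 p1 in linarith)+
    moreover have "FU z \<le> exp (- sim f \<gamma> (fst z) (snd z)) * JU (fst z)"
      unfolding FU_def by (rule ln_add_one_self_le_self) (use p0 p1 in linarith)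
    ultimately show ?thesis using p2 by linarith
  qed
  have FUb: "AE z in p_sim. norm (FU z) \<le> exp (1 / \<gamma>) * exp (1 / \<gamma>)"
  proof (rule AE_I2)
    fix z assume "z \<in> space p_sim"
    note pz = ptw[OF this]
    show "norm (FU z) \<le> exp (1 / \<gamma>) * exp (1 / \<gamma>)"
      unfolding real_norm_def abs_le_iff using pz by linarith
  qed
  have FUi: "integrable p_sim FU"
    by (rule ps.integrable_const_bound[OF FUb FUm])
  have "(\<integral>z. FS z \<partial>p_sim) \<le> (\<integral>z. FU z \<partial>p_sim)"
  proof (rule integral_mono_AE'[OF FUi])
    show "AE z in p_sim. FS z \<le> FU z"
    proof (rule AE_I2)
      fix z assume "z \<in> space p_sim"
      from ptw[OF this] show "FS z \<le> FU z" by linarith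
    qed
    show "AE z in p_sim. 0 \<le> FU z"
    proof (rule AE_I2)
      fix z assume "z \<in> space p_sim"
      from ptw[OF this] show "0 \<le> FU z" by linarith
    qed
  qed
  thus ?thesis unfolding eqU eqS .
qed

end
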